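(* Let $\mathcal{H}$ and $\mathcal{K}$ be graded connected Hopf algebras over a field $\Bbbk$ of characteristic different from $2$, let $\varphi:\mathcal{H}\to\Bbbk$ and $\psi:\mathcal{K}\to\Bbbk$ be characters, and let $\Phi:\mathcal{H}\to\mathcal{K}$ be a morphism of graded Hopf algebras with $\psi\circ\Phi=\varphi$. Then $\psi_+\circ\Phi=\varphi_+$ and $\psi_-\circ\Phi=\varphi_-$.
   Context: A character on a Hopf algebra $\mathcal{H}$ is an algebra morphism $\mathcal{H}\to\Bbbk$. The convolution product of linear functionals $\rho,\psi:\mathcal{H}\to\Bbbk$ is $\rho\psi=m\circ(\rho\otimes\psi)\circ\Delta$, where $\Delta$ is the coproduct of $\mathcal{H}$ and $m$ the multiplication of $\Bbbk$; characters form a group under convolution with unit the counit $\epsilon$. For a graded Hopf algebra and a functional $\varphi$, define $\bar\varphi(h)=(-1)^n\varphi(h)$ for $h$ homogeneous of degree $n$. A functional $\varphi$ is even if $\bar\varphi=\varphi$, and odd if it is convolution-invertible and $\bar\varphi=\varphi^{-1}$. On a graded connected Hopf algebra (degree-$0$ part equal to $\Bbbk\cdot 1$) every character $\varphi$ factors uniquely as $\varphi=\varphi_+\varphi_-$ (convolution product) with $\varphi_+$ an even character and $\varphi_-$ an odd character; $\varphi_+$ and $\varphi_-$ are called the even and odd parts of $\varphi$. *)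

theory Defs
  imports Complex_Main
begin

text \<open>A graded Hopf algebra over a field 'k, with underlying vector space given by the
type 'h (addition from the type class, scalar multiplication scl).
Elements of H (x) H are represented by finite Sweedler sums, i.e. lists of pairs;
since over a field elements of a tensor product are separated by pure tensors of linear
functionals, all axioms involving tensors are stated by pairing with such functionals.
The grading is given by the projections prj n onto the homogeneous components H_n.\<close>

record ('k, 'h) hopf =
  scl :: "'k \<Rightarrow> 'h \<Rightarrow> 'h"
  mlt :: "'h \<Rightarrow> 'h \<Rightarrow> 'h"
  one :: "'h"
  cop :: "'h \<Rightarrow> ('h \<times> 'h) list"
  cou :: "'h \<Rightarrow> 'k"
  ant :: "'h \<Rightarrow> 'h"
  prj :: "nat \<Rightarrow> 'h \<Rightarrow> 'h"

definition tpair :: "('h \<Rightarrow> 'k::comm_ring_1) \<Rightarrow> ('h \<Rightarrow> 'k) \<Rightarrow> ('h \<times> 'h) list \<Rightarrow> 'k" where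
  "tpair f g xs = sum_list (map (\<lambda>(a, b). f a * g b) xs)"

definition lfun :: "('k::field, 'h::ab_group_add) hopf \<Rightarrow> ('h \<Rightarrow> 'k) \<Rightarrow> bool" where
  "lfun H f \<longleftrightarrow> Vector_Spaces.linear (scl H) (*) f"

definition homog :: "('k, 'h) hopf \<Rightarrow> nat \<Rightarrow> 'h \<Rightarrow> bool" where
  "homog H n x \<longleftrightarrow> prj H n x = x"

definition graded_connected_hopf :: "('k::field, 'h::ab_group_add) hopf \<Rightarrow> bool" where
  "graded_connected_hopf H \<longleftrightarrow>
     \<comment> \<open>vector space\<close>
     vector_space (scl H) \<and>
     \<comment> \<open>associative unital algebra with bilinear product\<close>
     (\<forall>x. Vector_Spaces.linear (scl H) (scl H) (mlt H x)) \<and>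
     (\<forall>y. Vector_Spaces.linear (scl H) (scl H) (\<lambda>x. mlt H x y)) \<and>
     (\<forall>x y z. mlt H (mlt H x y) z = mlt H x (mlt H y z)) \<and>
     (\<forall>x. mlt H (one H) x = x \<and> mlt H x (one H) = x) \<and>
     \<comment> \<open>coalgebra: linear coproduct, coassociative, counit\<close>
     lfun H (cou H) \<and>
     (\<forall>f g x y c. lfun H f \<and> lfun H g \<longrightarrow>
        tpair f g (cop H (x + y)) = tpair f g (cop H x) + tpair f g (cop H y) \<and>
        tpair f g (cop H (scl H c x)) = c * tpair f g (cop H x)) \<and>
     (\<forall>f g k x. lfun H f \<and> lfun H g \<and> lfun H k \<longrightarrow>
        sum_list (map (\<lambda>(a, b). tpair f g (cop H a) * k b) (cop H x)) =
        sum_list (map (\<lambda>(a, b). f a * tpair g k (cop H b)) (cop H x))) \<and>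
     (\<forall>x. sum_list (map (\<lambda>(a, b). scl H (cou H a) b) (cop H x)) = x \<and>
          sum_list (map (\<lambda>(a, b). scl H (cou H b) a) (cop H x)) = x) \<and>
     \<comment> \<open>bialgebra: coproduct and counit are algebra morphisms\<close>
     (\<forall>f g x y. lfun H f \<and> lfun H g \<longrightarrow>
        tpair f g (cop H (mlt H x y)) =
        sum_list (map (\<lambda>(a, b). sum_list (map (\<lambda>(c, d). f (mlt H a c) * g (mlt H b d)) (cop H y)))
                      (cop H x))) \<and>
     (\<forall>f g. lfun H f \<and> lfun H g \<longrightarrow> tpair f g (cop H (one H)) = f (one H) * g (one H)) \<and>
     (\<forall>x y. cou H (mlt H x y) = cou H x * cou H y) \<and> cou H (one H) = 1 \<and>
     \<comment> \<open>antipode\<close>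
     Vector_Spaces.linear (scl H) (scl H) (ant H) \<and>
     (\<forall>x. sum_list (map (\<lambda>(a, b). mlt H (ant H a) b) (cop H x)) = scl H (cou H x) (one H) \<and>
          sum_list (map (\<lambda>(a, b). mlt H a (ant H b)) (cop H x)) = scl H (cou H x) (one H)) \<and>
     \<comment> \<open>grading: H is the direct sum of the images of the projections prj n\<close>
     (\<forall>n. Vector_Spaces.linear (scl H) (scl H) (prj H n)) \<and>
     (\<forall>n m x. prj H n (prj H m x) = (if n = m then prj H n x else 0)) \<and>
     (\<forall>x. finite {n. prj H n x \<noteq> 0} \<and> x = (\<Sum>n\<in>{n. prj H n x \<noteq> 0}. prj H n x)) \<and>
     \<comment> \<open>all structure maps respect the grading\<close>
     (\<forall>p q x y. homog H p x \<and> homog H q y \<longrightarrow> homog H (p + q) (mlt H x y)) \<and>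
     homog H 0 (one H) \<and>
     (\<forall>n p q x f g. homog H n x \<and> p + q \<noteq> n \<and> lfun H f \<and> lfun H g \<longrightarrow>
        tpair (f \<circ> prj H p) (g \<circ> prj H q) (cop H x) = 0) \<and>
     (\<forall>n x. homog H n x \<and> 0 < n \<longrightarrow> cou H x = 0) \<and>
     (\<forall>n x. homog H n x \<longrightarrow> homog H n (ant H x)) \<and>
     \<comment> \<open>connected: H_0 = k \<cdot> 1\<close>
     (\<forall>x. \<exists>c. prj H 0 x = scl H c (one H))"

definition graded_hopf_hom ::
  "('k::field, 'h::ab_group_add) hopf \<Rightarrow> ('k, 'g::ab_group_add) hopf \<Rightarrow> ('h \<Rightarrow> 'g) \<Rightarrow> bool" where
  "graded_hopf_hom H K \<Phi> \<longleftrightarrow>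
     Vector_Spaces.linear (scl H) (scl K) \<Phi> \<and>
     (\<forall>x y. \<Phi> (mlt H x y) = mlt K (\<Phi> x) (\<Phi> y)) \<and> \<Phi> (one H) = one K \<and>
     (\<forall>f g x. lfun K f \<and> lfun K g \<longrightarrow>
        tpair f g (cop K (\<Phi> x)) = tpair (f \<circ> \<Phi>) (g \<circ> \<Phi>) (cop H x)) \<and>
     (\<forall>x. cou K (\<Phi> x) = cou H x) \<and>
     (\<forall>x. \<Phi> (ant H x) = ant K (\<Phi> x)) \<and>
     (\<forall>n x. prj K n (\<Phi> x) = \<Phi> (prj H n x))"

definition conv :: "('k::comm_ring_1, 'h) hopf \<Rightarrow> ('h \<Rightarrow> 'k) \<Rightarrow> ('h \<Rightarrow> 'k) \<Rightarrow> 'h \<Rightarrow> 'k" where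
  "conv H \<rho> \<psi> x = tpair \<rho> \<psi> (cop H x)"

definition character :: "('k::field, 'h::ab_group_add) hopf \<Rightarrow> ('h \<Rightarrow> 'k) \<Rightarrow> bool" where
  "character H \<phi> \<longleftrightarrow> lfun H \<phi> \<and> (\<forall>x y. \<phi> (mlt H x y) = \<phi> x * \<phi> y) \<and> \<phi> (one H) = 1"

definition bar :: "('k::comm_ring_1, 'h::zero) hopf \<Rightarrow> ('h \<Rightarrow> 'k) \<Rightarrow> 'h \<Rightarrow> 'k" where
  "bar H \<phi> x = (\<Sum>n\<in>{n. prj H n x \<noteq> 0}. (-1) ^ n * \<phi> (prj H n x))"

definition even_fun :: "('k::field, 'h::ab_group_add) hopf \<Rightarrow> ('h \<Rightarrow> 'k) \<Rightarrow> bool" where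
  "even_fun H \<phi> \<longleftrightarrow> bar H \<phi> = \<phi>"

definition odd_fun :: "('k::field, 'h::ab_group_add) hopf \<Rightarrow> ('h \<Rightarrow> 'k) \<Rightarrow> bool" where
  "odd_fun H \<phi> \<longleftrightarrow> conv H \<phi> (bar H \<phi>) = cou H \<and> conv H (bar H \<phi>) \<phi> = cou H"

definition even_part :: "('k::field, 'h::ab_group_add) hopf \<Rightarrow> ('h \<Rightarrow> 'k) \<Rightarrow> 'h \<Rightarrow> 'k" where
  "even_part H \<phi> = (THE p. character H p \<and> even_fun H p \<and>
      (\<exists>m. character H m \<and> odd_fun H m \<and> \<phi> = conv H p m))"

definition odd_part :: "('k::field, 'h::ab_group_add) hopf \<Rightarrow> ('h \<Rightarrow> 'k) \<Rightarrow> 'h \<Rightarrow> 'k" where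
  "odd_part H \<phi> = (THE m. character H m \<and> odd_fun H m \<and>
      (\<exists>p. character H p \<and> even_fun H p \<and> \<phi> = conv H p m))"

end

theory Submission
  imports Defs
begin


lemma lin_mh: "Vector_Spaces.linear s1 s2 f \<Longrightarrow> module_hom s1 s2 f" by (simp add: linear_iff_module_hom)
lemma lin_add: "Vector_Spaces.linear s1 s2 f \<Longrightarrow> f (x+y) = f x + f y" using module_hom.add[OF lin_mh] by blast
lemma lin_scale: "Vector_Spaces.linear s1 s2 f \<Longrightarrow> f (s1 c x) = s2 c (f x)" using module_hom.scale[OF lin_mh] by blast
lemma lin_zero: "Vector_Spaces.linear s1 s2 f \<Longrightarrow> f 0 = 0" using module_hom.zero[OF lin_mh] by blast
lemma lin_neg: "Vector_Spaces.linear s1 s2 f \<Longrightarrow> f (-x) = - f x" using module_hom.neg[OF lin_mh] by blast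
lemma lin_diff: "Vector_Spaces.linear s1 s2 f \<Longrightarrow> f (x - y) = f x - f y" using module_hom.diff[OF lin_mh] by blast
lemma lin_sum: "Vector_Spaces.linear s1 s2 f \<Longrightarrow> f (sum g S) = (\<Sum>a\<in>S. f (g a))" using module_hom.sum[OF lin_mh] by blast
lemma lin_sum_list: "Vector_Spaces.linear s1 s2 f \<Longrightarrow> f (sum_list (map g L)) = sum_list (map (\<lambda>a. f (g a)) L)"
  by (induction L) (auto simp: lin_add lin_zero)

lemma linI: "vector_space s1 \<Longrightarrow> vector_space s2 \<Longrightarrow> (\<And>x y. f (x + y) = f x + f y) \<Longrightarrow> (\<And>c x. f (s1 c x) = s2 c (f x)) \<Longrightarrow> Vector_Spaces.linear s1 s2 f"
  unfolding Vector_Spaces.linear_iff by blast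

lemma sum_list_sum_swap: "sum_list (map (\<lambda>x. \<Sum>i\<in>S. F i x) L) = (\<Sum>i\<in>S. sum_list (map (F i) L))"
  by (induction L) (auto simp: sum.distrib)

lemma sum_list_sum_swap2: "sum_list (map (\<lambda>(a,b). \<Sum>i\<in>S. F i a b) L) = (\<Sum>i\<in>S. sum_list (map (\<lambda>(a,b). F i a b) L))"
  by (induction L) (auto simp: sum.distrib)

lemma sum_list_cmult: "sum_list (map (\<lambda>x. c * F x) L) = (c::'a::comm_ring_1) * sum_list (map F L)"
  by (induction L) (auto simp: algebra_simps)

lemma sum_list_multc: "sum_list (map (\<lambda>x. F x * c) L) = sum_list (map F L) * (c::'a::comm_ring_1)"
  by (induction L) (auto simp: algebra_simps)

lemma vs_mult: "vector_space ((*) :: 'k::field \<Rightarrow> 'k \<Rightarrow> 'k)"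
  by unfold_locales (auto simp: algebra_simps)

locale gch =
  fixes H :: "('k::field, 'h::ab_group_add) hopf"
  assumes gc: "graded_connected_hopf H"
begin

lemma
  vs: "vector_space (scl H)" and
  mlin1: "Vector_Spaces.linear (scl H) (scl H) (mlt H x)" and
  mlin2: "Vector_Spaces.linear (scl H) (scl H) (\<lambda>x. mlt H x y)" and
  massoc: "mlt H (mlt H x y) z = mlt H x (mlt H y z)" and
  munit1: "mlt H (one H) x = x" and munit2: "mlt H x (one H) = x" and
  coulin: "lfun H (cou H)" and
  coplin: "lfun H f \<Longrightarrow> lfun H g \<Longrightarrow> tpair f g (cop H (x + y)) = tpair f g (cop H x) + tpair f g (cop H y)" and
  coplin2: "lfun H f \<Longrightarrow> lfun H g \<Longrightarrow> tpair f g (cop H (scl H c x)) = c * tpair f g (cop H x)" and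
  coassoc: "lfun H f \<Longrightarrow> lfun H g \<Longrightarrow> lfun H k \<Longrightarrow>
        sum_list (map (\<lambda>(a, b). tpair f g (cop H a) * k b) (cop H x)) =
        sum_list (map (\<lambda>(a, b). f a * tpair g k (cop H b)) (cop H x))" and
  counit1: "sum_list (map (\<lambda>(a, b). scl H (cou H a) b) (cop H x)) = x" and
  counit2: "sum_list (map (\<lambda>(a, b). scl H (cou H b) a) (cop H x)) = x" and
  bialg: "lfun H f \<Longrightarrow> lfun H g \<Longrightarrow>
        tpair f g (cop H (mlt H x y)) =
        sum_list (map (\<lambda>(a, b). sum_list (map (\<lambda>(c, d). f (mlt H a c) * g (mlt H b d)) (cop H y)))
                      (cop H x))" and
  cop_one: "lfun H f \<Longrightarrow> lfun H g \<Longrightarrow> tpair f g (cop H (one H)) = f (one H) * g (one H)" and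
  cou_mult: "cou H (mlt H x y) = cou H x * cou H y" and
  cou_one: "cou H (one H) = 1" and
  antlin: "Vector_Spaces.linear (scl H) (scl H) (ant H)" and
  antipode1: "sum_list (map (\<lambda>(a, b). mlt H (ant H a) b) (cop H x)) = scl H (cou H x) (one H)" and
  antipode2: "sum_list (map (\<lambda>(a, b). mlt H a (ant H b)) (cop H x)) = scl H (cou H x) (one H)" and
  prjlin: "Vector_Spaces.linear (scl H) (scl H) (prj H n)" and
  prjprj: "prj H n (prj H m x) = (if n = m then prj H n x else 0)" and
  decomp_fin: "finite {n. prj H n x \<noteq> 0}" and
  decomp: "x = (\<Sum>n\<in>{n. prj H n x \<noteq> 0}. prj H n x)" and
  homog_mult: "homog H p x \<Longrightarrow> homog H q y \<Longrightarrow> homog H (p + q) (mlt H x y)" and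
  homog_one: "homog H 0 (one H)" and
  cop_grade: "homog H n x \<Longrightarrow> p + q \<noteq> n \<Longrightarrow> lfun H f \<Longrightarrow> lfun H g \<Longrightarrow>
        tpair (f \<circ> prj H p) (g \<circ> prj H q) (cop H x) = 0" and
  cou_grade: "homog H n x \<Longrightarrow> 0 < n \<Longrightarrow> cou H x = 0" and
  connected: "\<exists>c. prj H 0 x = scl H c (one H)"
  using gc unfolding graded_connected_hopf_def by (simp_all only:)

lemma sc_zero[simp]: "scl H c 0 = 0"
  using vs module.scale_zero_right module_iff_vector_space by metis

lemma lfunI: "(\<And>x y. f (x + y) = f x + f y) \<Longrightarrow> (\<And>c x. f (scl H c x) = c * f x) \<Longrightarrow> lfun H f"
  unfolding lfun_def by (rule linI[OF vs vs_mult])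

lemma lf_add: "lfun H f \<Longrightarrow> f (x + y) = f x + f y" unfolding lfun_def by (rule lin_add)
lemma lf_scale: "lfun H f \<Longrightarrow> f (scl H c x) = c * f x" unfolding lfun_def by (rule lin_scale)
lemma lf_zero: "lfun H f \<Longrightarrow> f 0 = 0" unfolding lfun_def by (rule lin_zero)
lemma lf_neg: "lfun H f \<Longrightarrow> f (- x) = - f x" unfolding lfun_def by (rule lin_neg)
lemma lf_diff: "lfun H f \<Longrightarrow> f (x - y) = f x - f y" unfolding lfun_def by (rule lin_diff)
lemma lf_sum: "lfun H f \<Longrightarrow> f (sum g S) = (\<Sum>a\<in>S. f (g a))" unfolding lfun_def by (rule lin_sum)
lemma lf_sum_list: "lfun H f \<Longrightarrow> f (sum_list (map g L)) = sum_list (map (\<lambda>a. f (g a)) L)"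
  unfolding lfun_def by (rule lin_sum_list)

lemma lf_comp: "lfun H f \<Longrightarrow> Vector_Spaces.linear (scl H) (scl H) h \<Longrightarrow> lfun H (f \<circ> h)"
  unfolding lfun_def by (rule Vector_Spaces.linear_compose)
lemma lf_comp': "lfun H f \<Longrightarrow> Vector_Spaces.linear (scl H) (scl H) h \<Longrightarrow> lfun H (\<lambda>x. f (h x))"
  using lf_comp[of f h] by (simp add: comp_def)
lemma lf_prj: "lfun H f \<Longrightarrow> lfun H (f \<circ> prj H n)" by (rule lf_comp[OF _ prjlin])
lemma lf_mulL: "lfun H f \<Longrightarrow> lfun H (\<lambda>x. f (mlt H c x))" by (rule lf_comp'[OF _ mlin1])
lemma lf_mulR: "lfun H f \<Longrightarrow> lfun H (\<lambda>x. f (mlt H x c))" by (rule lf_comp'[OF _ mlin2])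
lemma lf_cmult: "lfun H f \<Longrightarrow> lfun H (\<lambda>x. c * f x)"
  by (rule lfunI) (auto simp: lf_add lf_scale algebra_simps)
lemma lf_plus: "lfun H f \<Longrightarrow> lfun H g \<Longrightarrow> lfun H (\<lambda>x. f x + g x)"
  by (rule lfunI) (auto simp: lf_add lf_scale algebra_simps)
lemma lf_minus: "lfun H f \<Longrightarrow> lfun H g \<Longrightarrow> lfun H (\<lambda>x. f x - g x)"
  by (rule lfunI) (auto simp: lf_add lf_scale algebra_simps)
lemma lf_sumf: "(\<And>i. i \<in> S \<Longrightarrow> lfun H (F i)) \<Longrightarrow> lfun H (\<lambda>x. \<Sum>i\<in>S. F i x)"
  by (rule lfunI) (auto simp: lf_add lf_scale sum.distrib sum_distrib_left)

lemma prj_add: "prj H n (x + y) = prj H n x + prj H n y" by (rule lin_add[OF prjlin])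
lemma prj_scale: "prj H n (scl H c x) = scl H c (prj H n x)" by (rule lin_scale[OF prjlin])
lemma prj_zero[simp]: "prj H n 0 = 0" by (rule lin_zero[OF prjlin])
lemma prj_idem[simp]: "prj H n (prj H n x) = prj H n x" using prjprj by simp
lemma prj_other: "m \<noteq> n \<Longrightarrow> prj H m (prj H n x) = 0" using prjprj by simp
lemma homog_prj: "homog H n (prj H n x)" unfolding homog_def by simp

lemma decomp_sup: "finite S \<Longrightarrow> {n. prj H n x \<noteq> 0} \<subseteq> S \<Longrightarrow> x = (\<Sum>n\<in>S. prj H n x)"
proof -
  assume S: "finite S" "{n. prj H n x \<noteq> 0} \<subseteq> S"
  have "(\<Sum>n\<in>S. prj H n x) = (\<Sum>n\<in>{n. prj H n x \<noteq> 0}. prj H n x)"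
    by (rule sum.mono_neutral_right[OF S]) blast
  then show ?thesis using decomp[of x] by simp
qed

lemma bound_ex: "\<exists>B. \<forall>n\<ge>B. prj H n x = 0"
proof -
  obtain B where "\<forall>n\<in>{n. prj H n x \<noteq> 0}. n < B" using decomp_fin[of x] finite_nat_set_iff_bounded by blast
  then show ?thesis by (meson leD mem_Collect_eq)
qed

lemma decomp_lt: "(\<And>n. n \<ge> B \<Longrightarrow> prj H n x = 0) \<Longrightarrow> x = (\<Sum>n<B. prj H n x)"
  by (rule decomp_sup) (auto simp: not_less[symmetric])

lemma lf_decomp: "lfun H f \<Longrightarrow> (\<And>n. n \<ge> B \<Longrightarrow> prj H n x = 0) \<Longrightarrow> f x = (\<Sum>n<B. f (prj H n x))"
  using decomp_lt[of B x] lf_sum[of f] by metis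

lemma bound_list: "\<exists>B. \<forall>(a,b)\<in>set L. \<forall>n\<ge>B. prj H n a = 0 \<and> prj H n b = 0"
proof (induction L)
  case Nil then show ?case by simp
next
  case (Cons ab L)
  obtain a b where ab: "ab = (a,b)" by force
  obtain B where B: "\<forall>(a,b)\<in>set L. \<forall>n\<ge>B. prj H n a = 0 \<and> prj H n b = 0" using Cons by blast
  obtain B1 where B1: "\<forall>n\<ge>B1. prj H n a = 0" using bound_ex by blast
  obtain B2 where B2: "\<forall>n\<ge>B2. prj H n b = 0" using bound_ex by blast
  show ?case using B B1 B2 ab by (intro exI[of _ "max B (max B1 B2)"]) auto
qed

lemma bound_list_ge: "\<exists>B. B > m \<and> (\<forall>(a,b)\<in>set L. \<forall>n\<ge>B. prj H n a = 0 \<and> prj H n b = 0)"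
proof -
  obtain B where "\<forall>(a,b)\<in>set L. \<forall>n\<ge>B. prj H n a = 0 \<and> prj H n b = 0" using bound_list by blast
  then show ?thesis by (intro exI[of _ "max B (Suc m)"]) auto
qed

lemma tpair_expand:
  assumes f: "lfun H f" and g: "lfun H g"
    and B: "\<forall>(a,b)\<in>set L. \<forall>n\<ge>B. prj H n a = 0 \<and> prj H n b = 0"
  shows "tpair f g L = (\<Sum>p<B. \<Sum>q<B. tpair (f \<circ> prj H p) (g \<circ> prj H q) L)"
proof -
  have "\<And>a b. (a,b) \<in> set L \<Longrightarrow> f a * g b = (\<Sum>p<B. \<Sum>q<B. f (prj H p a) * g (prj H q b))"
  proof -
    fix a b assume "(a,b) \<in> set L"
    then have "f a = (\<Sum>p<B. f (prj H p a))" "g b = (\<Sum>q<B. g (prj H q b))"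
      using B lf_decomp[OF f, of B a] lf_decomp[OF g, of B b] by auto
    then show "f a * g b = (\<Sum>p<B. \<Sum>q<B. f (prj H p a) * g (prj H q b))"
      by (simp add: sum_product)
  qed
  then have "tpair f g L = sum_list (map (\<lambda>(a,b). \<Sum>p<B. \<Sum>q<B. f (prj H p a) * g (prj H q b)) L)"
    unfolding tpair_def by (intro arg_cong[where f=sum_list] map_cong) auto
  also have "\<dots> = (\<Sum>p<B. \<Sum>q<B. sum_list (map (\<lambda>(a,b). f (prj H p a) * g (prj H q b)) L))"
    by (simp only: sum_list_sum_swap2)
  finally show ?thesis by (simp only: tpair_def comp_def)
qed

lemma prj0: "prj H 0 a = scl H (cou H a) (one H)"
proof -
  obtain c where c: "prj H 0 a = scl H c (one H)" using connected by blast
  obtain B where B: "\<forall>n\<ge>B. prj H n a = 0" using bound_ex by blast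
  have "cou H a = (\<Sum>n<Suc B. cou H (prj H n a))" using lf_decomp[OF coulin, of "Suc B" a] B by auto
  also have "\<dots> = (\<Sum>n<Suc B. if n = 0 then cou H (prj H 0 a) else 0)"
    by (rule sum.cong) (auto intro: cou_grade[OF homog_prj])
  also have "\<dots> = cou H (prj H 0 a)" by simp
  also have "\<dots> = c" using c lf_scale[OF coulin] cou_one by simp
  finally show ?thesis using c by simp
qed

lemma lf_prj0: "lfun H f \<Longrightarrow> f (prj H 0 a) = cou H a * f (one H)" by (simp add: prj0 lf_scale)

lemma counit_lf1: "lfun H g \<Longrightarrow> sum_list (map (\<lambda>(a,b). cou H a * g b) L) = g (sum_list (map (\<lambda>(a,b). scl H (cou H a) b) L))"
  by (induction L) (auto simp: lf_add lf_scale lf_zero)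
lemma counit_lf2: "lfun H g \<Longrightarrow> sum_list (map (\<lambda>(a,b). g a * cou H b) L) = g (sum_list (map (\<lambda>(a,b). scl H (cou H b) a) L))"
  by (induction L) (auto simp: lf_add lf_scale lf_zero mult.commute)

lemma conv_cou_l: "lfun H g \<Longrightarrow> tpair (cou H) g (cop H x) = g x"
  unfolding tpair_def by (simp add: counit_lf1 counit1)
lemma conv_cou_r: "lfun H f \<Longrightarrow> tpair f (cou H) (cop H x) = f x"
  unfolding tpair_def by (simp add: counit_lf2 counit2)

lemma list_aux1: "sum_list (map (\<lambda>(a,b). cou H a * c * G b) L) = (c::'k) * sum_list (map (\<lambda>(a,b). cou H a * G b) L)"
  by (induction L) (auto simp: algebra_simps)
lemma list_aux2: "sum_list (map (\<lambda>(a,b). F a * (cou H b * c)) L) = (c::'k) * sum_list (map (\<lambda>(a,b). F a * cou H b) L)"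
  by (induction L) (auto simp: algebra_simps)

lemma tpair_0n: assumes f: "lfun H f" and g: "lfun H g"
  shows "tpair (f \<circ> prj H 0) (g \<circ> prj H n) (cop H y) = f (one H) * g (prj H n y)"
proof -
  have "tpair (f \<circ> prj H 0) (g \<circ> prj H n) (cop H y) = sum_list (map (\<lambda>(a,b). cou H a * f (one H) * (g \<circ> prj H n) b) (cop H y))"
    unfolding tpair_def by (simp add: lf_prj0[OF f])
  also have "\<dots> = f (one H) * (g \<circ> prj H n) y"
    by (simp only: list_aux1 counit_lf1[OF lf_prj[OF g]] counit1)
  finally show ?thesis by simp
qed

lemma tpair_n0: assumes f: "lfun H f" and g: "lfun H g"
  shows "tpair (f \<circ> prj H n) (g \<circ> prj H 0) (cop H y) = f (prj H n y) * g (one H)"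
proof -
  have "tpair (f \<circ> prj H n) (g \<circ> prj H 0) (cop H y) = sum_list (map (\<lambda>(a,b). (f \<circ> prj H n) a * (cou H b * g (one H))) (cop H y))"
    unfolding tpair_def by (simp add: lf_prj0[OF g])
  also have "\<dots> = g (one H) * (f \<circ> prj H n) y"
    by (simp only: list_aux2 counit_lf2[OF lf_prj[OF f]] counit2)
  finally show ?thesis by (simp add: mult.commute)
qed

lemma tpair_graded:
  assumes f: "lfun H f" and g: "lfun H g"
  shows "tpair f g (cop H (prj H n x)) = (\<Sum>p\<le>n. tpair (f \<circ> prj H p) (g \<circ> prj H (n-p)) (cop H (prj H n x)))"
proof -
  define T where "T p q = tpair (f \<circ> prj H p) (g \<circ> prj H q) (cop H (prj H n x))" for p q
  obtain B where B: "B > n" "\<forall>(a,b)\<in>set (cop H (prj H n x)). \<forall>k\<ge>B. prj H k a = 0 \<and> prj H k b = 0"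
    using bound_list_ge by blast
  have "tpair f g (cop H (prj H n x)) = (\<Sum>p<B. \<Sum>q<B. T p q)"
    unfolding T_def by (rule tpair_expand[OF f g B(2)])
  also have "\<dots> = (\<Sum>p<B. if p \<le> n then T p (n-p) else 0)"
  proof (rule sum.cong[OF refl])
    fix p assume "p \<in> {..<B}"
    have "(\<Sum>q<B. T p q) = (\<Sum>q<B. if q = n - p \<and> p \<le> n then T p q else 0)"
      by (rule sum.cong[OF refl]) (auto simp: T_def intro!: cop_grade[OF homog_prj _ f g])
    also have "\<dots> = (if p \<le> n then T p (n-p) else 0)" using B(1) by (cases "p \<le> n") auto
    finally show "(\<Sum>q<B. T p q) = (if p \<le> n then T p (n-p) else 0)" .
  qed
  also have "\<dots> = (\<Sum>p\<in>{..<B} \<inter> {..n}. T p (n-p))"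
    by (subst sum.inter_restrict) (auto simp: atMost_iff)
  also have "{..<B} \<inter> {..n} = {..n}" using B(1) by auto
  finally show ?thesis unfolding T_def by simp
qed

lemma tpair_deg0:
  assumes f: "lfun H f" and g: "lfun H g"
  shows "tpair f g (cop H (prj H 0 x)) = f (one H) * g (prj H 0 x)"
  using tpair_graded[OF f g, of 0 x] tpair_0n[OF f g, of 0 "prj H 0 x"] by simp

lemma tpair_mid:
  assumes f: "lfun H f" and g: "lfun H g" and n: "0 < n"
  shows "tpair f g (cop H (prj H n x)) = f (one H) * g (prj H n x) + f (prj H n x) * g (one H)
     + (\<Sum>p\<in>{0<..<n}. tpair (f \<circ> prj H p) (g \<circ> prj H (n-p)) (cop H (prj H n x)))"
proof -
  have "{..n} = insert 0 (insert n {0<..<n})" using n by auto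
  then show ?thesis using n
    by (simp add: tpair_graded[OF f g] tpair_0n[OF f g] tpair_n0[OF f g] add.assoc)
qed

lemma conv_lf: "lfun H f \<Longrightarrow> lfun H g \<Longrightarrow> lfun H (conv H f g)"
  by (rule lfunI) (simp_all add: conv_def coplin coplin2)

lemma conv_assoc: assumes f: "lfun H f" and g: "lfun H g" and h: "lfun H h"
  shows "conv H (conv H f g) h = conv H f (conv H g h)"
proof
  fix x
  have "conv H (conv H f g) h x = sum_list (map (\<lambda>(a,b). tpair f g (cop H a) * h b) (cop H x))"
    by (simp add: conv_def tpair_def[of "conv H f g"])
  also have "\<dots> = sum_list (map (\<lambda>(a,b). f a * tpair g h (cop H b)) (cop H x))"
    by (rule coassoc[OF f g h])
  also have "\<dots> = conv H f (conv H g h) x"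
    by (simp add: conv_def tpair_def[of f "conv H g h"])
  finally show "conv H (conv H f g) h x = conv H f (conv H g h) x" .
qed

lemma conv_unit_l: "lfun H g \<Longrightarrow> conv H (cou H) g = g"
  by (rule ext) (simp add: conv_def conv_cou_l)
lemma conv_unit_r: "lfun H f \<Longrightarrow> conv H f (cou H) = f"
  by (rule ext) (simp add: conv_def conv_cou_r)

lemma inv_unique: assumes a: "lfun H a" and b: "lfun H b" and c: "lfun H c"
  and ab: "conv H a b = cou H" and ca: "conv H c a = cou H"
  shows "b = c"
proof -
  have "b = conv H (conv H c a) b" using ca conv_unit_l[OF b] by simp
  also have "\<dots> = conv H c (conv H a b)" by (rule conv_assoc[OF c a b])
  also have "\<dots> = c" using ab conv_unit_r[OF c] by simp
  finally show ?thesis .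
qed

lemma conv_one: "lfun H f \<Longrightarrow> lfun H g \<Longrightarrow> conv H f g (one H) = f (one H) * g (one H)"
  by (simp add: conv_def cop_one)

lemma double_prod: "sum_list (map (\<lambda>(a,b). sum_list (map (\<lambda>(c,d). P a b * (Q c d::'a::comm_ring_1)) M)) L)
   = sum_list (map (\<lambda>(a,b). P a b) L) * sum_list (map (\<lambda>(c,d). Q c d) M)"
proof (induction L)
  case Nil then show ?case by simp
next
  case (Cons ab L)
  have "sum_list (map (\<lambda>(c,d). P (fst ab) (snd ab) * Q c d) M) = P (fst ab) (snd ab) * sum_list (map (\<lambda>(c,d). Q c d) M)"
    by (induction M) (auto simp: algebra_simps)
  then show ?case using Cons by (cases ab) (simp add: algebra_simps)
qed

lemma char_lf: "character H f \<Longrightarrow> lfun H f" by (simp add: character_def)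
lemma char_mult: "character H f \<Longrightarrow> f (mlt H x y) = f x * f y" by (simp add: character_def)
lemma char_one: "character H f \<Longrightarrow> f (one H) = 1" by (simp add: character_def)

lemma conv_char: assumes f: "character H f" and g: "character H g"
  shows "character H (conv H f g)"
  unfolding character_def
proof (intro conjI allI)
  show "lfun H (conv H f g)" using conv_lf char_lf f g by blast
  show "conv H f g (one H) = 1" using conv_one[OF char_lf[OF f] char_lf[OF g]] char_one[OF f] char_one[OF g] by simp
  fix x y
  have "conv H f g (mlt H x y) = sum_list (map (\<lambda>(a, b). sum_list (map (\<lambda>(c, d). f (mlt H a c) * g (mlt H b d)) (cop H y))) (cop H x))"
    unfolding conv_def by (rule bialg[OF char_lf[OF f] char_lf[OF g]])
  also have "\<dots> = sum_list (map (\<lambda>(a, b). sum_list (map (\<lambda>(c, d). (f a * g b) * (f c * g d)) (cop H y))) (cop H x))"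
    by (simp add: char_mult[OF f] char_mult[OF g] mult_ac)
  also have "\<dots> = conv H f g x * conv H f g y" by (simp only: double_prod conv_def tpair_def)
  finally show "conv H f g (mlt H x y) = conv H f g x * conv H f g y" .
qed

lemma lf_ant: "lfun H f \<Longrightarrow> lfun H (f \<circ> ant H)" by (rule lf_comp[OF _ antlin])

lemma conv_inv_r: assumes f: "character H f" shows "conv H f (f \<circ> ant H) = cou H"
proof
  fix x
  have "conv H f (f \<circ> ant H) x = sum_list (map (\<lambda>(a,b). f (mlt H a (ant H b))) (cop H x))"
    by (simp add: conv_def tpair_def char_mult[OF f] case_prod_beta')
  also have "\<dots> = f (sum_list (map (\<lambda>(a,b). mlt H a (ant H b)) (cop H x)))"
    by (simp add: lf_sum_list[OF char_lf[OF f]] case_prod_beta')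
  also have "\<dots> = cou H x" by (simp add: antipode2 lf_scale[OF char_lf[OF f]] char_one[OF f])
  finally show "conv H f (f \<circ> ant H) x = cou H x" .
qed

lemma conv_inv_l: assumes f: "character H f" shows "conv H (f \<circ> ant H) f = cou H"
proof
  fix x
  have "conv H (f \<circ> ant H) f x = sum_list (map (\<lambda>(a,b). f (mlt H (ant H a) b)) (cop H x))"
    by (simp add: conv_def tpair_def char_mult[OF f] case_prod_beta')
  also have "\<dots> = f (sum_list (map (\<lambda>(a,b). mlt H (ant H a) b) (cop H x)))"
    by (simp add: lf_sum_list[OF char_lf[OF f]] case_prod_beta')
  also have "\<dots> = cou H x" by (simp add: antipode1 lf_scale[OF char_lf[OF f]] char_one[OF f])
  finally show "conv H (f \<circ> ant H) f x = cou H x" .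
qed

lemma inv_one: assumes f: "character H f" shows "(f \<circ> ant H) (one H) = 1"
proof -
  have "conv H (f \<circ> ant H) f (one H) = 1" using conv_inv_l[OF f] cou_one by simp
  then show ?thesis using conv_one[OF lf_ant[OF char_lf[OF f]] char_lf[OF f]] char_one[OF f] by simp
qed

lemma cou_char: "character H (cou H)"
  unfolding character_def using coulin cou_mult cou_one by blast

lemma lf_ext_prj: assumes f: "lfun H f" and g: "lfun H g" and eq: "\<And>n x. f (prj H n x) = g (prj H n x)"
  shows "f = g"
proof
  fix x
  obtain B where B: "\<forall>n\<ge>B. prj H n x = 0" using bound_ex by blast
  then show "f x = g x" using lf_decomp[OF f, of B x] lf_decomp[OF g, of B x] eq by simp
qed

lemma bilin_ext:
  assumes B1: "\<And>y. lfun H (\<lambda>x. B x y)" and B2: "\<And>x. lfun H (\<lambda>y. B x y)"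
    and C1: "\<And>y. lfun H (\<lambda>x. C x y)" and C2: "\<And>x. lfun H (\<lambda>y. C x y)"
    and eq: "\<And>p q x y. B (prj H p x) (prj H q y) = C (prj H p x) (prj H q y)"
  shows "B x y = C x y"
proof -
  have h: "\<And>p z. B (prj H p z) = C (prj H p z)"
    by (rule lf_ext_prj[OF B2 C2]) (rule eq)
  have "(\<lambda>x. B x y) = (\<lambda>x. C x y)"
    by (rule lf_ext_prj[OF B1 C1]) (simp add: h)
  then show ?thesis by (rule fun_cong[where x=x, THEN trans[OF _ refl]])
qed

lemma bar_sup: assumes f: "lfun H f" and S: "finite S" "{n. prj H n x \<noteq> 0} \<subseteq> S"
  shows "bar H f x = (\<Sum>n\<in>S. (-1)^n * f (prj H n x))"
  unfolding bar_def
  by (rule sum.mono_neutral_left[OF S(1) S(2)]) (auto simp: lf_zero[OF f])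

lemma bar_lt: "lfun H f \<Longrightarrow> (\<And>n. n \<ge> B \<Longrightarrow> prj H n x = 0) \<Longrightarrow> bar H f x = (\<Sum>n<B. (-1)^n * f (prj H n x))"
  by (rule bar_sup) (auto simp: not_less[symmetric])

lemma bar_lf: assumes f: "lfun H f" shows "lfun H (bar H f)"
proof (rule lfunI)
  fix x y
  obtain B1 where B1: "\<forall>n\<ge>B1. prj H n x = 0" using bound_ex by blast
  obtain B2 where B2: "\<forall>n\<ge>B2. prj H n y = 0" using bound_ex by blast
  let ?B = "max B1 B2"
  have "bar H f (x + y) = (\<Sum>n<?B. (-1)^n * f (prj H n (x + y)))"
    using B1 B2 by (intro bar_lt[OF f]) (simp add: prj_add)
  also have "\<dots> = (\<Sum>n<?B. (-1)^n * f (prj H n x)) + (\<Sum>n<?B. (-1)^n * f (prj H n y))"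
    by (simp add: prj_add lf_add[OF f] algebra_simps sum.distrib)
  also have "\<dots> = bar H f x + bar H f y"
    using bar_lt[OF f, of ?B x] bar_lt[OF f, of ?B y] B1 B2 by simp
  finally show "bar H f (x + y) = bar H f x + bar H f y" .
next
  fix c x
  obtain B where B: "\<forall>n\<ge>B. prj H n x = 0" using bound_ex by blast
  have "bar H f (scl H c x) = (\<Sum>n<B. (-1)^n * f (prj H n (scl H c x)))"
    using B by (intro bar_lt[OF f]) (simp add: prj_scale)
  also have "\<dots> = c * (\<Sum>n<B. (-1)^n * f (prj H n x))"
    by (simp add: prj_scale lf_scale[OF f] sum_distrib_left algebra_simps)
  also have "\<dots> = c * bar H f x" using B bar_lt[OF f, of B x] by simp
  finally show "bar H f (scl H c x) = c * bar H f x" .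
qed

lemma bar_prj: assumes f: "lfun H f" shows "bar H f (prj H n x) = (-1)^n * f (prj H n x)"
proof -
  have "bar H f (prj H n x) = (\<Sum>k\<in>{n}. (-1)^k * f (prj H k (prj H n x)))"
    by (rule bar_sup[OF f]) (auto simp: prjprj split: if_splits)
  then show ?thesis by simp
qed

lemma bar_homog: assumes f: "lfun H f" and h: "homog H n z" shows "bar H f z = (-1)^n * f z"
  using bar_prj[OF f, of n z] h unfolding homog_def by simp

lemma bar_bar: assumes f: "lfun H f" shows "bar H (bar H f) = f"
  by (rule lf_ext_prj[OF bar_lf[OF bar_lf[OF f]] f]) (simp add: bar_prj f bar_lf)

lemma tpair_scal: "tpair (\<lambda>a. c * F a) (\<lambda>b. d * G b) L = c * d * tpair F G L"
  unfolding tpair_def by (induction L) (auto simp: algebra_simps)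

lemma bar_conv: assumes f: "lfun H f" and g: "lfun H g"
  shows "bar H (conv H f g) = conv H (bar H f) (bar H g)"
proof (rule lf_ext_prj[OF bar_lf[OF conv_lf[OF f g]] conv_lf[OF bar_lf[OF f] bar_lf[OF g]]])
  fix n x
  have e: "\<And>p. bar H f \<circ> prj H p = (\<lambda>a. (-1)^p * (f \<circ> prj H p) a)"
          "\<And>p. bar H g \<circ> prj H p = (\<lambda>a. (-1)^p * (g \<circ> prj H p) a)"
    by (auto simp: bar_prj f g)
  have "conv H (bar H f) (bar H g) (prj H n x) = (\<Sum>p\<le>n. (-1)^p * (-1)^(n-p) * tpair (f \<circ> prj H p) (g \<circ> prj H (n-p)) (cop H (prj H n x)))"
    unfolding conv_def tpair_graded[OF bar_lf[OF f] bar_lf[OF g]] e tpair_scal ..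
  also have "\<dots> = (\<Sum>p\<le>n. (-1)^n * tpair (f \<circ> prj H p) (g \<circ> prj H (n-p)) (cop H (prj H n x)))"
    by (rule sum.cong[OF refl]) (simp add: power_add[symmetric])
  also have "\<dots> = bar H (conv H f g) (prj H n x)"
    by (simp add: bar_prj conv_lf f g conv_def tpair_graded[OF f g] sum_distrib_left)
  finally show "bar H (conv H f g) (prj H n x) = conv H (bar H f) (bar H g) (prj H n x)" by simp
qed

lemma bar_cou: "bar H (cou H) = cou H"
proof (rule lf_ext_prj[OF bar_lf[OF coulin] coulin])
  fix n x show "bar H (cou H) (prj H n x) = cou H (prj H n x)"
  proof (cases n)
    case 0 then show ?thesis by (simp add: bar_prj coulin)
  next
    case (Suc m) then show ?thesis using cou_grade[OF homog_prj, of n x] by (simp add: bar_prj coulin)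
  qed
qed

lemma homog_mult_prj: "homog H (p+q) (mlt H (prj H p x) (prj H q y))"
  by (rule homog_mult[OF homog_prj homog_prj])

lemma bar_char: assumes f: "character H f" shows "character H (bar H f)"
  unfolding character_def
proof (intro conjI allI)
  have lf: "lfun H f" by (rule char_lf[OF f])
  show "lfun H (bar H f)" by (rule bar_lf[OF lf])
  show "bar H f (one H) = 1" using bar_homog[OF lf homog_one] char_one[OF f] by simp
  fix x y
  show "bar H f (mlt H x y) = bar H f x * bar H f y"
  proof (rule bilin_ext[where B="\<lambda>x y. bar H f (mlt H x y)" and C="\<lambda>x y. bar H f x * bar H f y"])
    fix p q x y
    show "bar H f (mlt H (prj H p x) (prj H q y)) = bar H f (prj H p x) * bar H f (prj H q y)"
      by (simp add: bar_homog[OF lf homog_mult_prj] bar_prj[OF lf] char_mult[OF f] power_add)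
  qed (auto intro: lf_mulL lf_mulR bar_lf lf lf_cmult simp: mult.commute)
qed

end


fun sqR :: "('k::field, 'h::ab_group_add) hopf \<Rightarrow> ('h \<Rightarrow> 'k) \<Rightarrow> nat \<Rightarrow> 'h \<Rightarrow> 'k" where
  "sqR H \<chi> 0 = cou H"
| "sqR H \<chi> (Suc n) = (\<lambda>x. sqR H \<chi> n x + inverse 2 * (\<chi> (prj H (Suc n) x) -
      (\<Sum>p\<in>{0<..<Suc n}. conv H (sqR H \<chi> n \<circ> prj H p) (sqR H \<chi> n \<circ> prj H (Suc n - p)) (prj H (Suc n) x))))"

definition sqrt_fun :: "('k::field, 'h::ab_group_add) hopf \<Rightarrow> ('h \<Rightarrow> 'k) \<Rightarrow> 'h \<Rightarrow> 'k" where
  "sqrt_fun H \<chi> x = (\<Sum>n\<in>{n. prj H n x \<noteq> 0}. sqR H \<chi> n (prj H n x))"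

context gch begin

lemma diag_sup: assumes F: "\<And>n. lfun H (F n)" and S: "finite S" "{n. prj H n x \<noteq> 0} \<subseteq> S"
  shows "(\<Sum>n\<in>{n. prj H n x \<noteq> 0}. F n (prj H n x)) = (\<Sum>n\<in>S. F n (prj H n x))"
  by (rule sum.mono_neutral_left[OF S(1) S(2)]) (auto simp: lf_zero[OF F])

lemma diag_lt: "(\<And>n. lfun H (F n)) \<Longrightarrow> (\<And>n. n \<ge> B \<Longrightarrow> prj H n x = 0) \<Longrightarrow>
   (\<Sum>n\<in>{n. prj H n x \<noteq> 0}. F n (prj H n x)) = (\<Sum>n<B. F n (prj H n x))"
  by (rule diag_sup) (auto simp: not_less[symmetric])

lemma diag_lf: assumes F: "\<And>n. lfun H (F n)"
  shows "lfun H (\<lambda>x. \<Sum>n\<in>{n. prj H n x \<noteq> 0}. F n (prj H n x))"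
proof (rule lfunI)
  fix x y
  obtain B1 where B1: "\<forall>n\<ge>B1. prj H n x = 0" using bound_ex by blast
  obtain B2 where B2: "\<forall>n\<ge>B2. prj H n y = 0" using bound_ex by blast
  let ?B = "max B1 B2"
  have "(\<Sum>n\<in>{n. prj H n (x+y) \<noteq> 0}. F n (prj H n (x+y))) = (\<Sum>n<?B. F n (prj H n (x + y)))"
    using B1 B2 by (intro diag_lt[OF F]) (simp add: prj_add)
  also have "\<dots> = (\<Sum>n<?B. F n (prj H n x)) + (\<Sum>n<?B. F n (prj H n y))"
    by (simp add: prj_add lf_add[OF F] sum.distrib)
  also have "\<dots> = (\<Sum>n\<in>{n. prj H n x \<noteq> 0}. F n (prj H n x)) + (\<Sum>n\<in>{n. prj H n y \<noteq> 0}. F n (prj H n y))"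
    using diag_lt[OF F, of ?B x] diag_lt[OF F, of ?B y] B1 B2 by simp
  finally show "(\<Sum>n\<in>{n. prj H n (x+y) \<noteq> 0}. F n (prj H n (x+y))) = (\<Sum>n\<in>{n. prj H n x \<noteq> 0}. F n (prj H n x)) + (\<Sum>n\<in>{n. prj H n y \<noteq> 0}. F n (prj H n y))" .
next
  fix c x
  obtain B where B: "\<forall>n\<ge>B. prj H n x = 0" using bound_ex by blast
  have "(\<Sum>n\<in>{n. prj H n (scl H c x) \<noteq> 0}. F n (prj H n (scl H c x))) = (\<Sum>n<B. F n (prj H n (scl H c x)))"
    using B by (intro diag_lt[OF F]) (simp add: prj_scale)
  also have "\<dots> = c * (\<Sum>n<B. F n (prj H n x))"
    by (simp add: prj_scale lf_scale[OF F] sum_distrib_left)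
  also have "\<dots> = c * (\<Sum>n\<in>{n. prj H n x \<noteq> 0}. F n (prj H n x))" using B diag_lt[OF F, of B x] by simp
  finally show "(\<Sum>n\<in>{n. prj H n (scl H c x) \<noteq> 0}. F n (prj H n (scl H c x))) = c * (\<Sum>n\<in>{n. prj H n x \<noteq> 0}. F n (prj H n x))" .
qed

lemma diag_prj: assumes F: "\<And>n. lfun H (F n)"
  shows "(\<Sum>n\<in>{n. prj H n (prj H k x) \<noteq> 0}. F n (prj H n (prj H k x))) = F k (prj H k x)"
proof -
  have "(\<Sum>n\<in>{n. prj H n (prj H k x) \<noteq> 0}. F n (prj H n (prj H k x))) = (\<Sum>n\<in>{k}. F n (prj H n (prj H k x)))"
    by (rule diag_sup[OF F]) (auto simp: prjprj split: if_splits)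
  then show ?thesis by simp
qed

lemma lf_convprj: "lfun H F \<Longrightarrow> lfun H G \<Longrightarrow> lfun H (\<lambda>x. conv H F G (prj H N x))"
  by (rule lf_comp'[OF conv_lf prjlin])

lemma sqR_lf: assumes c: "lfun H \<chi>" shows "lfun H (sqR H \<chi> n)"
proof (induction n)
  case 0 then show ?case using coulin by simp
next
  case (Suc n)
  have "lfun H (\<lambda>x. \<chi> (prj H (Suc n) x) -
      (\<Sum>p\<in>{0<..<Suc n}. conv H (sqR H \<chi> n \<circ> prj H p) (sqR H \<chi> n \<circ> prj H (Suc n - p)) (prj H (Suc n) x)))"
    by (intro lf_minus lf_comp'[OF c prjlin] lf_sumf lf_convprj lf_prj Suc.IH)
  from lf_plus[OF Suc.IH lf_cmult[OF this, of "inverse 2"]] show ?case by (simp only: sqR.simps)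
qed

lemma sqR_vanish: assumes c: "lfun H \<chi>" shows "k > n \<Longrightarrow> sqR H \<chi> n (prj H k x) = 0"
proof (induction n)
  case 0 then show ?case using cou_grade[OF homog_prj, of k x] by simp
next
  case (Suc n)
  then have "prj H (Suc n) (prj H k x) = 0" by (simp add: prjprj)
  then show ?case using Suc lf_zero[OF c] lf_zero[OF conv_lf[OF lf_prj lf_prj[OF sqR_lf[OF c]]]] sqR_lf[OF c]
    by simp
qed

lemma sqR_stable1: assumes c: "lfun H \<chi>" shows "k \<le> n \<Longrightarrow> sqR H \<chi> (Suc n) (prj H k x) = sqR H \<chi> n (prj H k x)"
proof -
  assume "k \<le> n"
  then have "prj H (Suc n) (prj H k x) = 0" by (simp add: prjprj)
  then show ?thesis using lf_zero[OF c] lf_zero[OF conv_lf[OF lf_prj lf_prj[OF sqR_lf[OF c]]]] sqR_lf[OF c]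
    by simp
qed

lemma sqR_stable: assumes c: "lfun H \<chi>" shows "k \<le> m \<Longrightarrow> sqR H \<chi> m (prj H k x) = sqR H \<chi> k (prj H k x)"
proof (induction m rule: dec_induct)
  case base then show ?case by simp
next
  case (step m) then show ?case using sqR_stable1[OF c, of k m x] by simp
qed

lemma sqrt_lf: assumes c: "lfun H \<chi>" shows "lfun H (sqrt_fun H \<chi>)"
  unfolding sqrt_fun_def[abs_def] by (rule diag_lf[OF sqR_lf[OF c]])

lemma sqrt_prj: assumes c: "lfun H \<chi>" shows "sqrt_fun H \<chi> (prj H k x) = sqR H \<chi> k (prj H k x)"
  unfolding sqrt_fun_def by (rule diag_prj[OF sqR_lf[OF c]])

lemma sqrt_one: assumes c: "lfun H \<chi>" shows "sqrt_fun H \<chi> (one H) = 1"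
  using sqrt_prj[OF c, of 0 "one H"] homog_one cou_one unfolding homog_def by simp

lemma sqrt_sq: assumes c: "lfun H \<chi>" and c1: "\<chi> (one H) = 1" and two: "(2::'k) \<noteq> 0"
  shows "conv H (sqrt_fun H \<chi>) (sqrt_fun H \<chi>) = \<chi>"
proof (rule lf_ext_prj[OF conv_lf[OF sqrt_lf[OF c] sqrt_lf[OF c]] c])
  let ?r = "sqrt_fun H \<chi>"
  have r: "lfun H ?r" by (rule sqrt_lf[OF c])
  fix N x
  show "conv H ?r ?r (prj H N x) = \<chi> (prj H N x)"
  proof (cases N)
    case 0
    have a: "cou H (prj H 0 x) = cou H x" by (simp only: prj0 lf_scale[OF coulin] cou_one mult_1_right)
    have "conv H ?r ?r (prj H 0 x) = ?r (one H) * ?r (prj H 0 x)" unfolding conv_def by (rule tpair_deg0[OF r r])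
    also have "\<dots> = cou H x" using sqrt_one[OF c] sqrt_prj[OF c, of 0 x] a by simp
    also have "\<dots> = \<chi> (prj H 0 x)" using lf_prj0[OF c, of x] c1 by simp
    finally show ?thesis using 0 by simp
  next
    case (Suc m)
    let ?y = "prj H N x"
    define M where "M = (\<Sum>p\<in>{0<..<Suc m}. conv H (sqR H \<chi> m \<circ> prj H p) (sqR H \<chi> m \<circ> prj H (Suc m - p)) (prj H (Suc m) x))"
    have e1: "?r \<circ> prj H p = sqR H \<chi> m \<circ> prj H p" if p: "p < N" for p
    proof (rule ext)
      fix z have "p \<le> m" using Suc p by simp
      then show "(?r \<circ> prj H p) z = (sqR H \<chi> m \<circ> prj H p) z"
        using sqrt_prj[OF c, of p z] sqR_stable[OF c, of p m z] by simp
    qed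
    have "conv H ?r ?r ?y = ?r (one H) * ?r ?y + ?r ?y * ?r (one H)
     + (\<Sum>p\<in>{0<..<N}. tpair (?r \<circ> prj H p) (?r \<circ> prj H (N-p)) (cop H ?y))"
      unfolding conv_def by (rule tpair_mid[OF r r]) (simp add: Suc)
    also have "(\<Sum>p\<in>{0<..<N}. tpair (?r \<circ> prj H p) (?r \<circ> prj H (N-p)) (cop H ?y)) = M"
      unfolding M_def conv_def using Suc by (intro sum.cong) (auto simp: e1)
    also have "?r ?y = inverse 2 * (\<chi> ?y - M)"
      using Suc sqrt_prj[OF c, of N x] sqR_vanish[OF c, of m N x] unfolding M_def by simp
    moreover have "(4::'k) \<noteq> 0"
    proof -
      have "(4::'k) = 2 * 2" by simp
      then show ?thesis using two by (metis no_zero_divisors)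
    qed
    ultimately show ?thesis using two sqrt_one[OF c] by (simp add: field_simps)
  qed
qed

end


definition T2 :: "('h \<Rightarrow> 'h \<Rightarrow> 'k::comm_ring_1) \<Rightarrow> ('h \<Rightarrow> 'h \<Rightarrow> 'k) \<Rightarrow> ('h \<times> 'h) list \<Rightarrow> ('h \<times> 'h) list \<Rightarrow> 'k" where
  "T2 B C L M = sum_list (map (\<lambda>(a,b). sum_list (map (\<lambda>(c,d). B a c * C b d) M)) L)"

lemma T2_swap: "T2 B C L M = sum_list (map (\<lambda>(c,d). tpair (\<lambda>a. B a c) (\<lambda>b. C b d) L) M)"
proof (induction L)
  case Nil then show ?case by (induction M) (auto simp: T2_def tpair_def)
next
  case (Cons ab L)
  have "sum_list (map (\<lambda>(c,d). tpair (\<lambda>a. B a c) (\<lambda>b. C b d) (ab # L)) M)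
    = sum_list (map (\<lambda>(c,d). B (fst ab) c * C (snd ab) d) M) + sum_list (map (\<lambda>(c,d). tpair (\<lambda>a. B a c) (\<lambda>b. C b d) L) M)"
    by (induction M) (auto simp: tpair_def case_prod_beta')
  then show ?case using Cons by (simp add: T2_def case_prod_beta')
qed

lemma T2_def2: "T2 B C L M = sum_list (map (\<lambda>(a,b). tpair (\<lambda>c. B a c) (\<lambda>d. C b d) M) L)"
  unfolding T2_def tpair_def ..

context gch begin

definition bil :: "('h \<Rightarrow> 'h \<Rightarrow> 'k) \<Rightarrow> bool" where
  "bil B \<longleftrightarrow> (\<forall>y. lfun H (\<lambda>x. B x y)) \<and> (\<forall>x. lfun H (\<lambda>y. B x y))"

lemma bil1: "bil B \<Longrightarrow> lfun H (\<lambda>x. B x y)" by (simp add: bil_def)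
lemma bil2: "bil B \<Longrightarrow> lfun H (\<lambda>y. B x y)" by (simp add: bil_def)
lemma bil_prj: "bil B \<Longrightarrow> bil (\<lambda>a c. B (prj H i a) (prj H j c))"
  unfolding bil_def by (auto intro: lf_comp'[OF _ prjlin])
lemma bil_prjL: "bil B \<Longrightarrow> bil (\<lambda>a c. B (prj H i a) c)"
  unfolding bil_def by (auto intro: lf_comp'[OF _ prjlin])
lemma bil_prjR: "bil B \<Longrightarrow> bil (\<lambda>a c. B a (prj H j c))"
  unfolding bil_def by (auto intro: lf_comp'[OF _ prjlin])

lemma T2_graded_left: assumes B: "bil B" and C: "bil C"
  shows "T2 B C (cop H (prj H p x)) M = (\<Sum>i\<le>p. T2 (\<lambda>a c. B (prj H i a) c) (\<lambda>b d. C (prj H (p-i) b) d) (cop H (prj H p x)) M)"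
proof -
  let ?L = "cop H (prj H p x)"
  have "T2 B C ?L M = sum_list (map (\<lambda>(c,d). tpair (\<lambda>a. B a c) (\<lambda>b. C b d) ?L) M)" by (rule T2_swap)
  also have "\<dots> = sum_list (map (\<lambda>(c,d). \<Sum>i\<le>p. tpair (\<lambda>a. B (prj H i a) c) (\<lambda>b. C (prj H (p-i) b) d) ?L) M)"
    using tpair_graded[OF bil1[OF B] bil1[OF C]] by (simp add: comp_def)
  also have "\<dots> = (\<Sum>i\<le>p. sum_list (map (\<lambda>(c,d). tpair (\<lambda>a. B (prj H i a) c) (\<lambda>b. C (prj H (p-i) b) d) ?L) M))"
    by (rule sum_list_sum_swap2)
  also have "\<dots> = (\<Sum>i\<le>p. T2 (\<lambda>a c. B (prj H i a) c) (\<lambda>b d. C (prj H (p-i) b) d) ?L M)"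
    by (simp only: T2_swap)
  finally show ?thesis .
qed

lemma T2_graded_right: assumes B: "bil B" and C: "bil C"
  shows "T2 B C L (cop H (prj H q y)) = (\<Sum>j\<le>q. T2 (\<lambda>a c. B a (prj H j c)) (\<lambda>b d. C b (prj H (q-j) d)) L (cop H (prj H q y)))"
proof -
  let ?M = "cop H (prj H q y)"
  have "T2 B C L ?M = sum_list (map (\<lambda>(a,b). tpair (\<lambda>c. B a c) (\<lambda>d. C b d) ?M) L)" by (rule T2_def2)
  also have "\<dots> = sum_list (map (\<lambda>(a,b). \<Sum>j\<le>q. tpair (\<lambda>c. B a (prj H j c)) (\<lambda>d. C b (prj H (q-j) d)) ?M) L)"
    using tpair_graded[OF bil2[OF B] bil2[OF C]] by (simp add: comp_def)
  also have "\<dots> = (\<Sum>j\<le>q. sum_list (map (\<lambda>(a,b). tpair (\<lambda>c. B a (prj H j c)) (\<lambda>d. C b (prj H (q-j) d)) ?M) L))"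
    by (rule sum_list_sum_swap2)
  also have "\<dots> = (\<Sum>j\<le>q. T2 (\<lambda>a c. B a (prj H j c)) (\<lambda>b d. C b (prj H (q-j) d)) L ?M)"
    by (simp only: T2_def2)
  finally show ?thesis .
qed

definition S2 where
  "S2 B C p q x y i j = T2 (\<lambda>a c. B (prj H i a) (prj H j c)) (\<lambda>b d. C (prj H (p-i) b) (prj H (q-j) d)) (cop H (prj H p x)) (cop H (prj H q y))"

lemma T2_graded: assumes B: "bil B" and C: "bil C"
  shows "T2 B C (cop H (prj H p x)) (cop H (prj H q y)) = (\<Sum>i\<le>p. \<Sum>j\<le>q. S2 B C p q x y i j)"
  unfolding T2_graded_left[OF B C] S2_def
  by (rule sum.cong[OF refl], rule T2_graded_right[OF bil_prjL[OF B] bil_prjL[OF C]])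

lemma list_c1: "sum_list (map (\<lambda>(c,d). K * (cou H c * G d)) M) = (K::'k) * sum_list (map (\<lambda>(c,d). cou H c * G d) M)"
  by (induction M) (auto simp: algebra_simps)
lemma list_c2: "sum_list (map (\<lambda>(c,d). K * (G c * cou H d)) M) = (K::'k) * sum_list (map (\<lambda>(c,d). G c * cou H d) M)"
  by (induction M) (auto simp: algebra_simps)

lemma list_c3: "sum_list (map (\<lambda>(a,b). (cou H a * K) * G b) L) = (K::'k) * sum_list (map (\<lambda>(a,b). cou H a * G b) L)"
  by (induction L) (auto simp: algebra_simps)
lemma list_c4: "sum_list (map (\<lambda>(a,b). (cou H b * K) * G a) L) = (K::'k) * sum_list (map (\<lambda>(a,b). G a * cou H b) L)"
  by (induction L) (auto simp: algebra_simps)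

lemma bil_prj0: assumes B: "bil B" shows "B (prj H 0 a) (prj H 0 c) = cou H a * cou H c * B (one H) (one H)"
  using lf_scale[OF bil1[OF B]] lf_scale[OF bil2[OF B]] by (simp add: prj0)

lemma T2_extreme0: assumes B: "bil B" and C: "bil C"
  shows "S2 B C p q x y 0 0 = B (one H) (one H) * C (prj H p x) (prj H q y)"
proof -
  let ?K = "B (one H) (one H)"
  have "S2 B C p q x y 0 0 = sum_list (map (\<lambda>(a,b). sum_list (map (\<lambda>(c,d). (cou H a * ?K) * (cou H c * C (prj H p b) (prj H q d))) (cop H (prj H q y)))) (cop H (prj H p x)))"
    unfolding S2_def T2_def by (simp add: bil_prj0[OF B] mult_ac)
  also have "\<dots> = sum_list (map (\<lambda>(a,b). (cou H a * ?K) * C (prj H p b) (prj H q y)) (cop H (prj H p x)))"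
    by (simp only: list_c1 counit_lf1[OF lf_comp'[OF bil2[OF C] prjlin]] counit1 prj_idem)
  also have "\<dots> = ?K * sum_list (map (\<lambda>(a,b). cou H a * C (prj H p b) (prj H q y)) (cop H (prj H p x)))"
    by (rule list_c3)
  also have "\<dots> = ?K * C (prj H p x) (prj H q y)"
    by (simp only: counit_lf1[OF lf_comp'[OF bil1[OF C] prjlin]] counit1 prj_idem)
  finally show ?thesis .
qed

lemma T2_extremepq: assumes B: "bil B" and C: "bil C"
  shows "S2 B C p q x y p q = B (prj H p x) (prj H q y) * C (one H) (one H)"
proof -
  let ?K = "C (one H) (one H)"
  have "S2 B C p q x y p q = sum_list (map (\<lambda>(a,b). sum_list (map (\<lambda>(c,d). (cou H b * ?K) * (B (prj H p a) (prj H q c) * cou H d)) (cop H (prj H q y)))) (cop H (prj H p x)))"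
    unfolding S2_def T2_def by (simp add: bil_prj0[OF C] mult_ac)
  also have "\<dots> = sum_list (map (\<lambda>(a,b). (cou H b * ?K) * B (prj H p a) (prj H q y)) (cop H (prj H p x)))"
    by (simp only: list_c2 counit_lf2[OF lf_comp'[OF bil2[OF B] prjlin]] counit2 prj_idem)
  also have "\<dots> = ?K * sum_list (map (\<lambda>(a,b). B (prj H p a) (prj H q y) * cou H b) (cop H (prj H p x)))"
    by (rule list_c4)
  also have "\<dots> = ?K * B (prj H p x) (prj H q y)"
    by (simp only: counit_lf2[OF lf_comp'[OF bil1[OF B] prjlin]] counit2 prj_idem)
  finally show ?thesis by (simp add: mult.commute)
qed


definition mid where
  "mid B C p q x y = (\<Sum>ij\<in>({..p} \<times> {..q}) - {(0,0),(p,q)}. S2 B C p q x y (fst ij) (snd ij))"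

definition star where "star B C x y = T2 B C (cop H x) (cop H y)"

lemma star_mid: assumes B: "bil B" and C: "bil C" and pq: "0 < p + q"
  shows "star B C (prj H p x) (prj H q y) = B (one H) (one H) * C (prj H p x) (prj H q y)
     + B (prj H p x) (prj H q y) * C (one H) (one H) + mid B C p q x y"
proof -
  let ?P = "{..p} \<times> {..q}"
  let ?R = "?P - {(0,0),(p,q)}"
  have P: "?P = insert (0,0) (insert (p,q) ?R)" by auto
  have fin: "finite ?R" by auto
  have n1: "(0,0) \<notin> insert (p,q) ?R" using pq by auto
  have n2: "(p,q) \<notin> ?R" by auto
  have "star B C (prj H p x) (prj H q y) = (\<Sum>i\<le>p. \<Sum>j\<le>q. S2 B C p q x y i j)"
    unfolding star_def by (rule T2_graded[OF B C])
  also have "\<dots> = (\<Sum>ij\<in>?P. S2 B C p q x y (fst ij) (snd ij))"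
    by (simp add: sum.cartesian_product case_prod_beta)
  also have "\<dots> = S2 B C p q x y 0 0 + (S2 B C p q x y p q + mid B C p q x y)"
    unfolding mid_def
    by (subst P, subst sum.insert[OF _ n1], simp add: fin, subst sum.insert[OF fin n2], simp)
  finally show ?thesis by (simp add: T2_extreme0[OF B C] T2_extremepq[OF B C] add.assoc)
qed

lemma mid_cong: assumes n: "n = p + q"
  and hB: "\<And>i j a c. i + j < n \<Longrightarrow> B (prj H i a) (prj H j c) = B' (prj H i a) (prj H j c)"
  and hC: "\<And>i j a c. i + j < n \<Longrightarrow> C (prj H i a) (prj H j c) = C' (prj H i a) (prj H j c)"
  shows "mid B C p q x y = mid B' C' p q x y"
  unfolding mid_def
proof (rule sum.cong[OF refl])
  fix ij assume ij: "ij \<in> {..p} \<times> {..q} - {(0,0),(p,q)}"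
  obtain i j where e: "ij = (i,j)" by force
  have 1: "i + j < n" using ij e n by auto
  have 2: "(p - i) + (q - j) < n" using ij e n by auto
  have hb: "\<And>a c. B (prj H i a) (prj H j c) = B' (prj H i a) (prj H j c)" using hB[OF 1] .
  have hc: "\<And>b d. C (prj H (p-i) b) (prj H (q-j) d) = C' (prj H (p-i) b) (prj H (q-j) d)" using hC[OF 2] .
  show "S2 B C p q x y (fst ij) (snd ij) = S2 B' C' p q x y (fst ij) (snd ij)"
    unfolding S2_def T2_def e fst_conv snd_conv hb hc ..
qed

lemma bil_eq_induct: assumes B: "bil B" and C: "bil C" and one: "B (one H) (one H) = C (one H) (one H)"
  and step: "\<And>p q x y. 0 < p + q \<Longrightarrow> (\<And>i j a c. i + j < p + q \<Longrightarrow> B (prj H i a) (prj H j c) = C (prj H i a) (prj H j c))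
      \<Longrightarrow> B (prj H p x) (prj H q y) = C (prj H p x) (prj H q y)"
  shows "B x y = C x y"
proof -
  have main: "\<forall>p q x y. p + q = n \<longrightarrow> B (prj H p x) (prj H q y) = C (prj H p x) (prj H q y)" for n
  proof (induction n rule: less_induct)
    case (less n)
    show ?case
    proof (intro allI impI)
      fix p q x y assume pq: "p + q = n"
      show "B (prj H p x) (prj H q y) = C (prj H p x) (prj H q y)"
      proof (cases "n = 0")
        case True
        then have "p = 0" "q = 0" using pq by auto
        then show ?thesis using bil_prj0[OF B] bil_prj0[OF C] one by simp
      next
        case False
        show ?thesis
        proof (rule step)
          show "0 < p + q" using False pq by simp
          fix i j a c assume "i + j < p + q"
          then show "B (prj H i a) (prj H j c) = C (prj H i a) (prj H j c)" using less.IH pq by blast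
        qed
      qed
    qed
  qed
  show ?thesis
    by (rule bilin_ext[OF bil1[OF B] bil2[OF B] bil1[OF C] bil2[OF C]]) (use main in blast)
qed

lemma lf_multc: "lfun H f \<Longrightarrow> lfun H (\<lambda>x. f x * c)"
  using lf_cmult[of f c] by (simp add: mult.commute)

lemma bil_prod: "lfun H f \<Longrightarrow> lfun H g \<Longrightarrow> bil (\<lambda>x y. f x * g y)"
  unfolding bil_def by (auto intro: lf_multc lf_cmult)

lemma bil_mult: "lfun H f \<Longrightarrow> bil (\<lambda>x y. f (mlt H x y))"
  unfolding bil_def by (auto intro: lf_mulL lf_mulR)

lemma star_prod: "star (\<lambda>x y. f x * f' y) (\<lambda>x y. g x * g' y) x y = conv H f g x * conv H f' g' y"
proof -
  have "star (\<lambda>x y. f x * f' y) (\<lambda>x y. g x * g' y) x y =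
     sum_list (map (\<lambda>(a,b). sum_list (map (\<lambda>(c,d). (f a * g b) * (f' c * g' d)) (cop H y))) (cop H x))"
    unfolding star_def T2_def by (simp add: mult_ac)
  also have "\<dots> = conv H f g x * conv H f' g' y" by (simp only: double_prod conv_def tpair_def)
  finally show ?thesis .
qed

lemma star_mult: assumes f: "lfun H f" and g: "lfun H g"
  shows "star (\<lambda>x y. f (mlt H x y)) (\<lambda>x y. g (mlt H x y)) x y = conv H f g (mlt H x y)"
  unfolding star_def T2_def conv_def by (rule bialg[OF f g, symmetric])

lemma sqrt_char: assumes r: "lfun H r" and r1: "r (one H) = 1" and c: "character H \<chi>"
  and sq: "conv H r r = \<chi>" and two: "(2::'k) \<noteq> 0"
  shows "character H r"
  unfolding character_def
proof (intro conjI allI)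
  show "lfun H r" "r (one H) = 1" using r r1 by auto
  let ?B = "\<lambda>x y. r (mlt H x y)" and ?C = "\<lambda>x y. r x * r y"
  have B: "bil ?B" by (rule bil_mult[OF r])
  have C: "bil ?C" by (rule bil_prod[OF r r])
  have ss: "star ?B ?B x y = star ?C ?C x y" for x y
    using star_mult[OF r r, of x y] star_prod[of r r r r x y] sq char_mult[OF c] by simp
  fix x y
  show "r (mlt H x y) = r x * r y"
  proof (rule bil_eq_induct[OF B C, of x y])
    show "r (mlt H (one H) (one H)) = r (one H) * r (one H)" using r1 munit1 by simp
    fix p q x y
    assume pq: "0 < p + q" and IH: "\<And>i j a c. i + j < p + q \<Longrightarrow> ?B (prj H i a) (prj H j c) = ?C (prj H i a) (prj H j c)"
    have "mid ?B ?B p q x y = mid ?C ?C p q x y" by (rule mid_cong[where B="?B" and B'="?C" and C="?B" and C'="?C" and n="p+q", OF refl IH IH])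
    note midEq = this
    have b11: "r (mlt H (one H) (one H)) = 1" using r1 munit1 by simp
    have E1: "star ?B ?B (prj H p x) (prj H q y) = 1 * ?B (prj H p x) (prj H q y) + ?B (prj H p x) (prj H q y) * 1 + mid ?B ?B p q x y"
      using star_mid[OF B B pq, of x y] unfolding b11 .
    have E2: "star ?C ?C (prj H p x) (prj H q y) = 1 * ?C (prj H p x) (prj H q y) + ?C (prj H p x) (prj H q y) * 1 + mid ?C ?C p q x y"
      using star_mid[OF C C pq, of x y] unfolding r1 mult_1_left .
    have "1 * ?B (prj H p x) (prj H q y) + ?B (prj H p x) (prj H q y) * 1 + mid ?B ?B p q x y = 1 * ?C (prj H p x) (prj H q y) + ?C (prj H p x) (prj H q y) * 1 + mid ?C ?C p q x y"
      using E1 E2 ss[of "prj H p x" "prj H q y"] by metis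
    then have "2 * ?B (prj H p x) (prj H q y) = 2 * ?C (prj H p x) (prj H q y)"
      unfolding midEq mult_1_left mult_1_right add_right_cancel mult_2 .
    then show "?B (prj H p x) (prj H q y) = ?C (prj H p x) (prj H q y)" using two by (metis mult_cancel_left)
  qed
qed

lemma inv_char: assumes f: "character H f" shows "character H (f \<circ> ant H)"
  unfolding character_def
proof (intro conjI allI)
  have lf: "lfun H f" by (rule char_lf[OF f])
  let ?i = "f \<circ> ant H"
  have li: "lfun H ?i" by (rule lf_ant[OF lf])
  show "lfun H ?i" by (rule li)
  show i1: "?i (one H) = 1" by (rule inv_one[OF f])
  let ?D = "\<lambda>x y. f x * f y" and ?B = "\<lambda>x y. ?i (mlt H x y)" and ?C = "\<lambda>x y. ?i x * ?i y"
  have D: "bil ?D" by (rule bil_prod[OF lf lf])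
  have B: "bil ?B" by (rule bil_mult[OF li])
  have C: "bil ?C" by (rule bil_prod[OF li li])
  have "star ?D ?B x y = star (\<lambda>x y. f (mlt H x y)) ?B x y" for x y
    using char_mult[OF f] by simp
  then have ss: "star ?D ?B x y = star ?D ?C x y" for x y
    using star_mult[OF lf li, of x y] star_prod[of f f ?i ?i x y] conv_inv_r[OF f] cou_mult by simp
  fix x y
  show "?i (mlt H x y) = ?i x * ?i y"
  proof (rule bil_eq_induct[OF B C, of x y])
    show "?i (mlt H (one H) (one H)) = ?i (one H) * ?i (one H)" using i1 munit1 by simp
    fix p q x y
    assume pq: "0 < p + q" and IH: "\<And>i j a c. i + j < p + q \<Longrightarrow> ?B (prj H i a) (prj H j c) = ?C (prj H i a) (prj H j c)"
    have "mid ?D ?B p q x y = mid ?D ?C p q x y" by (rule mid_cong[where B="?D" and B'="?D" and C="?B" and C'="?C" and n="p+q", OF refl _ IH]) simp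
    note midEq = this
    have b11: "f (ant H (mlt H (one H) (one H))) = 1" using i1 munit1 by simp
    have d11: "f (one H) * f (one H) = 1" using char_one[OF f] by simp
    have i1': "f (ant H (one H)) = 1" using i1 by simp
    have E1: "star ?D ?B (prj H p x) (prj H q y) = 1 * ?B (prj H p x) (prj H q y) + ?D (prj H p x) (prj H q y) * 1 + mid ?D ?B p q x y"
      using star_mid[OF D B pq, of x y] by (simp add: b11 char_one[OF f])
    have E2: "star ?D ?C (prj H p x) (prj H q y) = 1 * ?C (prj H p x) (prj H q y) + ?D (prj H p x) (prj H q y) * 1 + mid ?D ?C p q x y"
      using star_mid[OF D C pq, of x y] by (simp add: i1' char_one[OF f])
    show "?B (prj H p x) (prj H q y) = ?C (prj H p x) (prj H q y)"
      using E1 E2 ss[of "prj H p x" "prj H q y"] midEq by simp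
  qed
qed

end


context gch begin

lemma sq_unique: assumes f: "lfun H f" and g: "lfun H g" and f1: "f (one H) = 1" and g1: "g (one H) = 1"
  and eq: "conv H f f = conv H g g" and two: "(2::'k) \<noteq> 0"
  shows "f = g"
proof -
  have main: "\<forall>x. f (prj H n x) = g (prj H n x)" for n
  proof (induction n rule: less_induct)
    case (less n)
    show ?case
    proof
      fix x
      show "f (prj H n x) = g (prj H n x)"
      proof (cases "n = 0")
        case True then show ?thesis using lf_prj0[OF f] lf_prj0[OF g] f1 g1 by simp
      next
        case False
        then have n: "0 < n" by simp
        have e: "f \<circ> prj H p = g \<circ> prj H p" if "p < n" for p
          using less.IH[OF that] by auto
        have M: "(\<Sum>p\<in>{0<..<n}. tpair (f \<circ> prj H p) (f \<circ> prj H (n-p)) (cop H (prj H n x)))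
            = (\<Sum>p\<in>{0<..<n}. tpair (g \<circ> prj H p) (g \<circ> prj H (n-p)) (cop H (prj H n x)))"
          by (rule sum.cong[OF refl]) (simp add: e)
        have "tpair f f (cop H (prj H n x)) = tpair g g (cop H (prj H n x))"
          using eq unfolding conv_def by metis
        then have "1 * f (prj H n x) + f (prj H n x) * 1 = 1 * g (prj H n x) + g (prj H n x) * 1"
          unfolding tpair_mid[OF f f n] tpair_mid[OF g g n] f1 g1 M by simp
        then have "2 * f (prj H n x) = 2 * g (prj H n x)"
          unfolding mult_1_left mult_1_right mult_2 .
        then show ?thesis using two by (metis mult_cancel_left)
      qed
    qed
  qed
  show ?thesis by (rule lf_ext_prj[OF f g]) (use main in blast)
qed

lemma inv_cancel_l: assumes m: "character H m" and g: "lfun H g"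
  shows "conv H (m \<circ> ant H) (conv H m g) = g"
  using conv_assoc[OF lf_ant[OF char_lf[OF m]] char_lf[OF m] g] conv_inv_l[OF m] conv_unit_l[OF g] by simp

lemma inv_cancel_l2: assumes m: "character H m" and g: "lfun H g"
  shows "conv H m (conv H (m \<circ> ant H) g) = g"
  using conv_assoc[OF char_lf[OF m] lf_ant[OF char_lf[OF m]] g] conv_inv_r[OF m] conv_unit_l[OF g] by simp

lemma bar_inv: assumes g: "character H g" shows "bar H (g \<circ> ant H) = bar H g \<circ> ant H"
proof (rule inv_unique)
  have lg: "lfun H g" by (rule char_lf[OF g])
  show "lfun H (bar H g)" by (rule bar_lf[OF lg])
  show "lfun H (bar H (g \<circ> ant H))" by (rule bar_lf[OF lf_ant[OF lg]])
  show "lfun H (bar H g \<circ> ant H)" by (rule lf_ant[OF bar_lf[OF lg]])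
  show "conv H (bar H g) (bar H (g \<circ> ant H)) = cou H"
    using bar_conv[OF lg lf_ant[OF lg]] conv_inv_r[OF g] bar_cou by simp
  show "conv H (bar H g \<circ> ant H) (bar H g) = cou H" by (rule conv_inv_l[OF bar_char[OF g]])
qed

lemma odd_bar: assumes m: "character H m" and o: "odd_fun H m" shows "bar H m = m \<circ> ant H"
  by (rule inv_unique[OF char_lf[OF m] bar_lf[OF char_lf[OF m]] lf_ant[OF char_lf[OF m]]])
     (use o conv_inv_l[OF m] in \<open>auto simp: odd_fun_def\<close>)

lemma existence: assumes two: "(2::'k) \<noteq> 0" and phi: "character H \<phi>"
  shows "\<exists>p m. character H p \<and> even_fun H p \<and> character H m \<and> odd_fun H m \<and> \<phi> = conv H p m"
proof -
  define b where "b = bar H \<phi>"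
  have bc: "character H b" unfolding b_def by (rule bar_char[OF phi])
  have ibc: "character H (b \<circ> ant H)" by (rule inv_char[OF bc])
  define \<chi> where "\<chi> = conv H (b \<circ> ant H) \<phi>"
  have cc: "character H \<chi>" unfolding \<chi>_def by (rule conv_char[OF ibc phi])
  define m where "m = sqrt_fun H \<chi>"
  have lm: "lfun H m" unfolding m_def by (rule sqrt_lf[OF char_lf[OF cc]])
  have m1: "m (one H) = 1" unfolding m_def by (rule sqrt_one[OF char_lf[OF cc]])
  have mm: "conv H m m = \<chi>" unfolding m_def by (rule sqrt_sq[OF char_lf[OF cc] char_one[OF cc] two])
  have mc: "character H m" by (rule sqrt_char[OF lm m1 cc mm two])
  have imc: "character H (m \<circ> ant H)" by (rule inv_char[OF mc])
  have ipc: "character H (\<phi> \<circ> ant H)" by (rule inv_char[OF phi])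
  note L = char_lf[OF bc] char_lf[OF ibc] char_lf[OF cc] lm char_lf[OF imc] char_lf[OF phi] char_lf[OF ipc] coulin
  note CL = conv_lf
  have bphi: "bar H b = \<phi>" unfolding b_def by (rule bar_bar[OF char_lf[OF phi]])
  have barchi: "bar H \<chi> = conv H (\<phi> \<circ> ant H) b"
    unfolding \<chi>_def using bar_conv[OF char_lf[OF ibc] char_lf[OF phi]] bar_inv[OF bc] bphi b_def by simp
  have inv1: "conv H \<chi> (conv H (m \<circ> ant H) (m \<circ> ant H)) = cou H"
  proof -
    have "conv H \<chi> (conv H (m \<circ> ant H) (m \<circ> ant H)) = conv H m (conv H (conv H m (m \<circ> ant H)) (m \<circ> ant H))"
      using L by (simp add: mm[symmetric] conv_assoc CL)
    also have "\<dots> = cou H" using L conv_inv_r[OF mc] by (simp add: conv_unit_l)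
    finally show ?thesis .
  qed
  have inv2: "conv H (conv H (\<phi> \<circ> ant H) b) \<chi> = cou H"
  proof -
    have "conv H (conv H (\<phi> \<circ> ant H) b) \<chi> = conv H (\<phi> \<circ> ant H) (conv H (conv H b (b \<circ> ant H)) \<phi>)"
      using L by (simp add: \<chi>_def conv_assoc CL)
    also have "\<dots> = cou H" using L conv_inv_r[OF bc] conv_inv_l[OF phi] by (simp add: conv_unit_l)
    finally show ?thesis .
  qed
  have "conv H (m \<circ> ant H) (m \<circ> ant H) = conv H (\<phi> \<circ> ant H) b"
    by (rule inv_unique[OF char_lf[OF cc] _ _ inv1 inv2]) (use L in \<open>auto intro: CL\<close>)
  also have "\<dots> = conv H (bar H m) (bar H m)" using barchi bar_conv[OF lm lm] mm by simp
  finally have "m \<circ> ant H = bar H m"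
    by (rule sq_unique[OF char_lf[OF imc] bar_lf[OF lm] char_one[OF imc] char_one[OF bar_char[OF mc]] _ two])
  note bm = this[symmetric]
  have odd: "odd_fun H m" unfolding odd_fun_def bm using conv_inv_r[OF mc] conv_inv_l[OF mc] by simp
  define p where "p = conv H \<phi> (m \<circ> ant H)"
  have pc: "character H p" unfolding p_def by (rule conv_char[OF phi imc])
  have phib: "\<phi> = conv H b \<chi>"
    unfolding \<chi>_def using L conv_inv_r[OF bc] by (simp add: conv_assoc[symmetric] CL conv_unit_l)
  have "bar H p = conv H b (bar H (bar H m))"
    unfolding p_def b_def bm[symmetric] by (rule bar_conv[OF char_lf[OF phi] bar_lf[OF lm]])
  also have "\<dots> = conv H b m" by (simp add: bar_bar[OF lm])
  also have "\<dots> = conv H (conv H b (conv H m m)) (m \<circ> ant H)"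
    using L conv_inv_r[OF mc] by (simp add: conv_assoc CL conv_unit_r)
  also have "\<dots> = p" unfolding p_def mm phib[symmetric] ..
  finally have even: "even_fun H p" unfolding even_fun_def .
  have "conv H p m = \<phi>" unfolding p_def using L conv_inv_l[OF mc] by (simp add: conv_assoc CL conv_unit_r)
  then show ?thesis using pc even mc odd by metis
qed

lemma uniqueness: assumes two: "(2::'k) \<noteq> 0"
  and p: "character H p" "even_fun H p" and m: "character H m" "odd_fun H m"
  and p': "character H p'" "even_fun H p'" and m': "character H m'" "odd_fun H m'"
  and eq: "conv H p m = conv H p' m'"
  shows "p = p' \<and> m = m'"
proof -
  have key: "conv H m m = conv H (bar H (conv H p m) \<circ> ant H) (conv H p m) \<and> p = conv H (conv H p m) (m \<circ> ant H)"
    if p: "character H p" "even_fun H p" and m: "character H m" "odd_fun H m" for p m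
  proof -
    define \<phi> where "\<phi> = conv H p m"
    have phic: "character H \<phi>" unfolding \<phi>_def by (rule conv_char[OF p(1) m(1)])
    have bc: "character H (bar H \<phi>)" by (rule bar_char[OF phic])
    have imc: "character H (m \<circ> ant H)" by (rule inv_char[OF m(1)])
    note L = char_lf[OF p(1)] char_lf[OF m(1)] char_lf[OF phic] char_lf[OF bc] lf_ant[OF char_lf[OF bc]] char_lf[OF imc] coulin
    note CL = conv_lf
    have bphi: "bar H \<phi> = conv H p (m \<circ> ant H)"
      unfolding \<phi>_def bar_conv[OF char_lf[OF p(1)] char_lf[OF m(1)]] odd_bar[OF m]
      using p(2) by (simp add: even_fun_def)
    have s1: "conv H (bar H \<phi>) (conv H m m) = \<phi>"
      unfolding bphi using L by (simp add: conv_assoc CL inv_cancel_l[OF m(1)] \<phi>_def)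
    have "conv H (bar H \<phi> \<circ> ant H) \<phi> = conv H (bar H \<phi> \<circ> ant H) (conv H (bar H \<phi>) (conv H m m))"
      by (simp only: s1)
    also have "\<dots> = conv H m m" by (rule inv_cancel_l[OF bc conv_lf[OF char_lf[OF m(1)] char_lf[OF m(1)]]])
    finally have 1: "conv H m m = conv H (bar H \<phi> \<circ> ant H) \<phi>" ..
    have 2: "p = conv H \<phi> (m \<circ> ant H)"
      unfolding \<phi>_def using L conv_inv_r[OF m(1)] by (simp add: conv_assoc CL conv_unit_r)
    show ?thesis using 1 2 unfolding \<phi>_def by simp
  qed
  note k1 = key[OF p m] and k2 = key[OF p' m']
  have "m = m'"
    by (rule sq_unique[OF char_lf[OF m(1)] char_lf[OF m'(1)] char_one[OF m(1)] char_one[OF m'(1)] _ two])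
       (use k1 k2 eq in simp)
  then show ?thesis using k1 k2 eq by simp
qed

end



lemma even_odd_parts:
  fixes H :: "('k::field, 'h::ab_group_add) hopf"
  assumes g: "gch H" and two: "(2::'k) \<noteq> 0"
    and pc: "character H p" and pe: "even_fun H p" and mc: "character H m" and mo: "odd_fun H m"
    and phi: "\<phi> = conv H p m"
  shows "even_part H \<phi> = p \<and> odd_part H \<phi> = m"
proof
  interpret gch H by (rule g)
  show "even_part H \<phi> = p"
    unfolding even_part_def
  proof (rule the_equality)
    show "character H p \<and> even_fun H p \<and> (\<exists>m. character H m \<and> odd_fun H m \<and> \<phi> = conv H p m)"
      using pc pe mc mo phi by blast
    fix x assume "character H x \<and> even_fun H x \<and> (\<exists>m. character H m \<and> odd_fun H m \<and> \<phi> = conv H x m)"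
    then obtain m' where "character H x" "even_fun H x" "character H m'" "odd_fun H m'" "\<phi> = conv H x m'" by blast
    then show "x = p" using uniqueness[OF two pc pe mc mo] phi by metis
  qed
  show "odd_part H \<phi> = m"
    unfolding odd_part_def
  proof (rule the_equality)
    show "character H m \<and> odd_fun H m \<and> (\<exists>p. character H p \<and> even_fun H p \<and> \<phi> = conv H p m)"
      using pc pe mc mo phi by blast
    fix x assume "character H x \<and> odd_fun H x \<and> (\<exists>p. character H p \<and> even_fun H p \<and> \<phi> = conv H p x)"
    then obtain p' where "character H x" "odd_fun H x" "character H p'" "even_fun H p'" "\<phi> = conv H p' x" by blast
    then show "x = m" using uniqueness[OF two pc pe mc mo] phi by metis
  qed
qed

theorem lemma2p2:
  fixes H :: "('k::field, 'h::ab_group_add) hopf"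
    and K :: "('k, 'g::ab_group_add) hopf"
    and \<phi> :: "'h \<Rightarrow> 'k" and \<psi> :: "'g \<Rightarrow> 'k" and \<Phi> :: "'h \<Rightarrow> 'g"
  assumes "(2::'k) \<noteq> 0"
    and "graded_connected_hopf H" and "graded_connected_hopf K"
    and "character H \<phi>" and "character K \<psi>"
    and "graded_hopf_hom H K \<Phi>"
    and "\<psi> \<circ> \<Phi> = \<phi>"
  shows "even_part K \<psi> \<circ> \<Phi> = even_part H \<phi> \<and> odd_part K \<psi> \<circ> \<Phi> = odd_part H \<phi>"
proof -
  note two = assms(1)
  have gH: "gch H" by unfold_locales (rule assms(2))
  have gK: "gch K" by unfold_locales (rule assms(3))
  interpret HH: gch H by (rule gH)
  interpret KK: gch K by (rule gK)
  have hlin: "Vector_Spaces.linear (scl H) (scl K) \<Phi>"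
    and hmul: "\<And>x y. \<Phi> (mlt H x y) = mlt K (\<Phi> x) (\<Phi> y)" and hone: "\<Phi> (one H) = one K"
    and hcop: "\<And>f g x. lfun K f \<Longrightarrow> lfun K g \<Longrightarrow> tpair f g (cop K (\<Phi> x)) = tpair (f \<circ> \<Phi>) (g \<circ> \<Phi>) (cop H x)"
    and hcou: "\<And>x. cou K (\<Phi> x) = cou H x"
    and hprj: "\<And>n x. prj K n (\<Phi> x) = \<Phi> (prj H n x)"
    using assms(6) unfolding graded_hopf_hom_def by blast+
  have lcomp: "lfun H (f \<circ> \<Phi>)" if "lfun K f" for f
    using that unfolding lfun_def by (rule Vector_Spaces.linear_compose[OF hlin])
  have ccomp: "conv H (f \<circ> \<Phi>) (g \<circ> \<Phi>) = conv K f g \<circ> \<Phi>" if "lfun K f" "lfun K g" for f g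
    by (rule ext) (simp add: conv_def hcop[OF that])
  have chcomp: "character H (f \<circ> \<Phi>)" if "character K f" for f
    using that lcomp[OF KK.char_lf[OF that]] unfolding character_def by (simp add: hmul hone)
  have bcomp: "bar H (f \<circ> \<Phi>) = bar K f \<circ> \<Phi>" if f: "lfun K f" for f
  proof (rule HH.lf_ext_prj[OF HH.bar_lf[OF lcomp[OF f]] lcomp[OF KK.bar_lf[OF f]]])
    fix n x
    have "(bar K f \<circ> \<Phi>) (prj H n x) = bar K f (prj K n (\<Phi> x))" by (simp add: hprj)
    also have "\<dots> = (-1)^n * f (prj K n (\<Phi> x))" by (rule KK.bar_prj[OF f])
    also have "\<dots> = bar H (f \<circ> \<Phi>) (prj H n x)" by (simp add: HH.bar_prj[OF lcomp[OF f]] hprj)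
    finally show "bar H (f \<circ> \<Phi>) (prj H n x) = (bar K f \<circ> \<Phi>) (prj H n x)" ..
  qed
  have coucomp: "cou K \<circ> \<Phi> = cou H" by (rule ext) (simp add: hcou)
  obtain pK mK where K: "character K pK" "even_fun K pK" "character K mK" "odd_fun K mK" "\<psi> = conv K pK mK"
    using KK.existence[OF two assms(5)] by blast
  have partsK: "even_part K \<psi> = pK \<and> odd_part K \<psi> = mK"
    by (rule even_odd_parts[OF gK two K])
  have pe: "even_fun H (pK \<circ> \<Phi>)"
    using K(2) bcomp[OF KK.char_lf[OF K(1)]] unfolding even_fun_def by simp
  have mo: "odd_fun H (mK \<circ> \<Phi>)"
    using K(4) bcomp[OF KK.char_lf[OF K(3)]] ccomp[OF KK.char_lf[OF K(3)] KK.bar_lf[OF KK.char_lf[OF K(3)]]]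
      ccomp[OF KK.bar_lf[OF KK.char_lf[OF K(3)]] KK.char_lf[OF K(3)]] coucomp
    unfolding odd_fun_def by simp
  have phi: "\<phi> = conv H (pK \<circ> \<Phi>) (mK \<circ> \<Phi>)"
    using assms(7) K(5) ccomp[OF KK.char_lf[OF K(1)] KK.char_lf[OF K(3)]] by simp
  have partsH: "even_part H \<phi> = pK \<circ> \<Phi> \<and> odd_part H \<phi> = mK \<circ> \<Phi>"
    by (rule even_odd_parts[OF gH two chcomp[OF K(1)] pe chcomp[OF K(3)] mo phi])
  show ?thesis using partsK partsH by simp
qed


end
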